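(* Let $\gamma>\gamma^\star$ and define $\mathcal{K}_\gamma^+=\Phi(\mathcal{G}_\gamma^+)$ and $\mathcal{K}_\gamma^-=\Phi(\mathcal{G}_\gamma^-)$. If $\mathcal{K}_\gamma$ has two path-connected components $\mathcal{K}_\gamma^+$ and $\mathcal{K}_\gamma^-$, then for any $T\in\mathbb{R}^{n_x\times n_x}$ invertible with $\det T<0$, the mapping $\mathscr{T}_T$ restricts to a diffeomorphism from $\mathcal{K}_\gamma^+$ onto $\mathcal{K}_\gamma^-$.
   Context: Consider the continuous-time linear plant $\dot x=Ax+B_1w+B_2u$, $z=C_1x+D_{11}w+D_{12}u$, $y=C_2x+D_{21}w$, with $x\in\mathbb{R}^{n_x}$, $w\in\mathbb{R}^{n_w}$, $u\in\mathbb{R}^{n_u}$, $y\in\mathbb{R}^{n_y}$, $z\in\mathbb{R}^{n_z}$ and real matrices of compatible dimensions; assume $(A,B_2)$ stabilizable and $(C_2,A)$ detectable. A full-order controller $\dot\xi=A_K\xi+B_Ky$, $u=C_K\xi+D_Ky$, $\xi\in\mathbb{R}^{n_x}$, is identified with $K=\begin{bmatrix}D_K & C_K\\ B_K & A_K\end{bmatrix}$. Closed-loop matrices: $A_{cl}=\begin{bmatrix}A+B_2D_KC_2 & B_2C_K\\ B_KC_2 & A_K\end{bmatrix}$, $B_{cl}=\begin{bmatrix}B_1+B_2D_KD_{21}\\ B_KD_{21}\end{bmatrix}$, $C_{cl}=\begin{bmatrix}C_1+D_{12}D_KC_2 & D_{12}C_K\end{bmatrix}$, $D_{cl}=D_{11}+D_{12}D_KD_{21}$;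 $\mathcal{C}_{stab}$ is the set of $K$ with $A_{cl}$ Hurwitz; $\mathbf{T}_{zw}(s)=C_{cl}(sI-A_{cl})^{-1}B_{cl}+D_{cl}$; $\mathcal{K}_\gamma=\{K\in\mathcal{C}_{stab}:\|\mathbf{T}_{zw}\|_\infty<\gamma\}$; $\gamma^\star=\inf_{K\in\mathcal{C}_{stab}}\|\mathbf{T}_{zw}\|_\infty$. For invertible $T$, $\mathscr{T}_T(K)=\begin{bmatrix}D_K & C_KT^{-1}\\ TB_K & TA_KT^{-1}\end{bmatrix}$ (similarity transformation). For $X,Y\in\mathbb{S}^{n_x}$, $\hat A\in\mathbb{R}^{n_x\times n_x}$, $\hat B\in\mathbb{R}^{n_x\times n_y}$, $\hat C\in\mathbb{R}^{n_u\times n_x}$, $\hat D\in\mathbb{R}^{n_u\times n_y}$, let $M_\gamma$ be the symmetric $4\times4$ block matrix with $M_{11}=AX+XA^T+B_2\hat C+(B_2\hat C)^T$, $M_{12}=\hat A^T+A+B_2\hat DC_2$, $M_{13}=B_1+B_2\hat DD_{21}$, $M_{14}=(C_1X+D_{12}\hat C)^T$, $M_{22}=A^TY+YA+\hat BC_2+(\hat BC_2)^T$, $M_{23}=YB_1+\hat BD_{21}$, $M_{24}=(C_1+D_{12}\hat DC_2)^T$, $M_{33}=-\gamma I$, $M_{34}=(D_{11}+D_{12}\hat DD_{21})^T$, $M_{44}=-\gamma I$. $\mathcal{G}_\gamma$ is the set of $(X,Y,\hat A,\hat B,\hat C,\hat D,\Pi,\Xi)$ with $\begin{bmatrix}X&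 I\\ I& Y\end{bmatrix}\succ0$, $M_\gamma\prec0$, $\Pi,\Xi\in\mathbb{R}^{n_x\times n_x}$ and $\Xi\Pi=I-YX$; $\mathcal{G}_\gamma^{\pm}$ are the subsets with $\det\Pi>0$, resp. $\det\Pi<0$. $\Phi(X,Y,\hat A,\hat B,\hat C,\hat D,\Pi,\Xi)=\begin{bmatrix} I & 0\\ YB_2 & \Xi\end{bmatrix}^{-1}\begin{bmatrix}\hat D & \hat C\\ \hat B & \hat A-YAX\end{bmatrix}\begin{bmatrix} I & C_2X\\ 0 & \Pi\end{bmatrix}^{-1}$ (well defined on $\mathcal{G}_\gamma$, with $\Phi(\mathcal{G}_\gamma)=\mathcal{K}_\gamma$). *)

theory Defs
  imports "HOL-Analysis.Analysis"
begin

definition blockm ::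
  "'a^'n1::finite^'m1::finite \<Rightarrow> 'a^'n2::finite^'m1 \<Rightarrow> 'a^'n1^'m2::finite \<Rightarrow> 'a^'n2^'m2 \<Rightarrow> 'a^('n1+'n2)^('m1+'m2)" where
  "blockm P Q R S = (\<chi> i j. case i of
      Inl i1 \<Rightarrow> (case j of Inl j1 \<Rightarrow> P$i1$j1 | Inr j2 \<Rightarrow> Q$i1$j2)
    | Inr i2 \<Rightarrow> (case j of Inl j1 \<Rightarrow> R$i2$j1 | Inr j2 \<Rightarrow> S$i2$j2))"

definition blk11 :: "'a^('n1::finite+'n2::finite)^('m1::finite+'m2::finite) \<Rightarrow> 'a^'n1^'m1" where
  "blk11 K = (\<chi> i j. K $ Inl i $ Inl j)"
definition blk12 :: "'a^('n1::finite+'n2::finite)^('m1::finite+'m2::finite) \<Rightarrow> 'a^'n2^'m1" where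
  "blk12 K = (\<chi> i j. K $ Inl i $ Inr j)"
definition blk21 :: "'a^('n1::finite+'n2::finite)^('m1::finite+'m2::finite) \<Rightarrow> 'a^'n1^'m2" where
  "blk21 K = (\<chi> i j. K $ Inr i $ Inl j)"
definition blk22 :: "'a^('n1::finite+'n2::finite)^('m1::finite+'m2::finite) \<Rightarrow> 'a^'n2^'m2" where
  "blk22 K = (\<chi> i j. K $ Inr i $ Inr j)"

definition pos_def :: "real^'n::finite^'n \<Rightarrow> bool" where
  "pos_def M \<longleftrightarrow> transpose M = M \<and> (\<forall>v. v \<noteq> 0 \<longrightarrow> v \<bullet> (M *v v) > 0)"

definition neg_def :: "real^'n::finite^'n \<Rightarrow> bool" where
  "neg_def M \<longleftrightarrow> transpose M = M \<and> (\<forall>v. v \<noteq> 0 \<longrightarrow> v \<bullet> (M *v v) < 0)"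

definition cplx :: "real^'n::finite^'m::finite \<Rightarrow> complex^'n^'m" where
  "cplx M = (\<chi> i j. complex_of_real (M$i$j))"

definition hurwitz :: "real^'n::finite^'n \<Rightarrow> bool" where
  "hurwitz A \<longleftrightarrow> (\<forall>s::complex. det (mat s - cplx A) = 0 \<longrightarrow> Re s < 0)"

record ('x,'w,'u,'y,'z) plant =
  pA   :: "real^'x^'x"
  pB1  :: "real^'w^'x"
  pB2  :: "real^'u^'x"
  pC1  :: "real^'x^'z"
  pD11 :: "real^'w^'z"
  pD12 :: "real^'u^'z"
  pC2  :: "real^'x^'y"
  pD21 :: "real^'w^'y"

definition stabilizable :: "real^'x::finite^'x \<Rightarrow> real^'u::finite^'x \<Rightarrow> bool" where
  "stabilizable A B \<longleftrightarrow> (\<exists>F::real^'x^'u. hurwitz (A + B ** F))"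

definition detectable :: "real^'x::finite^'y::finite \<Rightarrow> real^'x^'x \<Rightarrow> bool" where
  "detectable C A \<longleftrightarrow> (\<exists>L::real^'y^'x. hurwitz (A + L ** C))"

text \<open>A controller \<open>K = [D_K, C_K; B_K, A_K]\<close> is a real matrix of size
  \<open>(n_u+n_x) \<times> (n_y+n_x)\<close>: \<open>D_K = blk11 K\<close>, \<open>C_K = blk12 K\<close>,
  \<open>B_K = blk21 K\<close>, \<open>A_K = blk22 K\<close>.\<close>

type_synonym ('x,'u,'y) ctrl = "real^('y+'x)^('u+'x)"

definition Acl :: "('x::finite,'w::finite,'u::finite,'y::finite,'z::finite) plant \<Rightarrow> ('x,'u,'y) ctrl \<Rightarrow> real^('x+'x)^('x+'x)" where
  "Acl P K = blockm (pA P + pB2 P ** blk11 K ** pC2 P) (pB2 P ** blk12 K)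
                    (blk21 K ** pC2 P) (blk22 K)"

definition Bcl :: "('x::finite,'w::finite,'u::finite,'y::finite,'z::finite) plant \<Rightarrow> ('x,'u,'y) ctrl \<Rightarrow> real^'w^('x+'x)" where
  "Bcl P K = (\<chi> i. case i of Inl i1 \<Rightarrow> (pB1 P + pB2 P ** blk11 K ** pD21 P) $ i1
                         | Inr i2 \<Rightarrow> (blk21 K ** pD21 P) $ i2)"

definition Ccl :: "('x::finite,'w::finite,'u::finite,'y::finite,'z::finite) plant \<Rightarrow> ('x,'u,'y) ctrl \<Rightarrow> real^('x+'x)^'z" where
  "Ccl P K = (\<chi> i j. case j of Inl j1 \<Rightarrow> (pC1 P + pD12 P ** blk11 K ** pC2 P) $ i $ j1
                           | Inr j2 \<Rightarrow> (pD12 P ** blk12 K) $ i $ j2)"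

definition Dcl :: "('x::finite,'w::finite,'u::finite,'y::finite,'z::finite) plant \<Rightarrow> ('x,'u,'y) ctrl \<Rightarrow> real^'w^'z" where
  "Dcl P K = pD11 P + pD12 P ** blk11 K ** pD21 P"

definition Cstab :: "('x::finite,'w::finite,'u::finite,'y::finite,'z::finite) plant \<Rightarrow> ('x,'u,'y) ctrl set" where
  "Cstab P = {K. hurwitz (Acl P K)}"

definition Tzw :: "('x::finite,'w::finite,'u::finite,'y::finite,'z::finite) plant \<Rightarrow> ('x,'u,'y) ctrl \<Rightarrow> complex \<Rightarrow> complex^'w^'z" where
  "Tzw P K s = cplx (Ccl P K) ** matrix_inv (mat s - cplx (Acl P K)) ** cplx (Bcl P K)
               + cplx (Dcl P K)"

text \<open>H-infinity norm: supremum over the imaginary axis of the largest singular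
  value (= induced Euclidean operator norm).\<close>
definition hinf_norm :: "('x::finite,'w::finite,'u::finite,'y::finite,'z::finite) plant \<Rightarrow> ('x,'u,'y) ctrl \<Rightarrow> real" where
  "hinf_norm P K = Sup (range (\<lambda>\<omega>::real. onorm (\<lambda>v. Tzw P K (\<i> * complex_of_real \<omega>) *v v)))"

definition Kgamma :: "('x::finite,'w::finite,'u::finite,'y::finite,'z::finite) plant \<Rightarrow> real \<Rightarrow> ('x,'u,'y) ctrl set" where
  "Kgamma P \<gamma> = {K \<in> Cstab P. hinf_norm P K < \<gamma>}"

definition gamma_opt :: "('x::finite,'w::finite,'u::finite,'y::finite,'z::finite) plant \<Rightarrow> real" where
  "gamma_opt P = Inf (hinf_norm P ` Cstab P)"

definition simtrans :: "real^'x::finite^'x \<Rightarrow> ('x,'u::finite,'y::finite) ctrl \<Rightarrow> ('x,'u,'y) ctrl" where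
  "simtrans T K = blockm (blk11 K) (blk12 K ** matrix_inv T)
                         (T ** blk21 K) (T ** blk22 K ** matrix_inv T)"

text \<open>Tuple \<open>(X, Y, Ahat, Bhat, Chat, Dhat, Pm, Xi)\<close>.\<close>
type_synonym ('x,'u,'y) lmivar =
  "(real^'x^'x) \<times> (real^'x^'x) \<times> (real^'x^'x) \<times> (real^'y^'x) \<times> (real^'x^'u) \<times> (real^'y^'u)
   \<times> (real^'x^'x) \<times> (real^'x^'x)"

definition Mgamma :: "('x::finite,'w::finite,'u::finite,'y::finite,'z::finite) plant \<Rightarrow> real
    \<Rightarrow> real^'x^'x \<Rightarrow> real^'x^'x \<Rightarrow> real^'x^'x \<Rightarrow> real^'y^'x \<Rightarrow> real^'x^'u \<Rightarrow> real^'y^'u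
    \<Rightarrow> real^(('x+'x)+('w+'z))^(('x+'x)+('w+'z))" where
  "Mgamma P \<gamma> X Y Ah Bh Ch Dh =
    (let A = pA P; B1 = pB1 P; B2 = pB2 P; C1 = pC1 P; D11 = pD11 P; D12 = pD12 P;
         C2 = pC2 P; D21 = pD21 P;
         M11 = A ** X + X ** transpose A + B2 ** Ch + transpose (B2 ** Ch);
         M12 = transpose Ah + A + B2 ** Dh ** C2;
         M13 = B1 + B2 ** Dh ** D21;
         M14 = transpose (C1 ** X + D12 ** Ch);
         M22 = transpose A ** Y + Y ** A + Bh ** C2 + transpose (Bh ** C2);
         M23 = Y ** B1 + Bh ** D21;
         M24 = transpose (C1 + D12 ** Dh ** C2);
         M33 = mat (-\<gamma>);
         M34 = transpose (D11 + D12 ** Dh ** D21);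
         M44 = mat (-\<gamma>);
         Up = blockm M13 M14 M23 M24
     in blockm (blockm M11 M12 (transpose M12) M22) Up
               (transpose Up) (blockm M33 M34 (transpose M34) M44))"

definition Ggamma :: "('x::finite,'w::finite,'u::finite,'y::finite,'z::finite) plant \<Rightarrow> real \<Rightarrow> ('x,'u,'y) lmivar set" where
  "Ggamma P \<gamma> = {(X, Y, Ah, Bh, Ch, Dh, Pm, Xi).
      transpose X = X \<and> transpose Y = Y \<and>
      pos_def (blockm X (mat 1) (mat 1) Y) \<and>
      neg_def (Mgamma P \<gamma> X Y Ah Bh Ch Dh) \<and>
      Xi ** Pm = mat 1 - Y ** X}"

definition Ggamma_plus :: "('x::finite,'w::finite,'u::finite,'y::finite,'z::finite) plant \<Rightarrow> real \<Rightarrow> ('x,'u,'y) lmivar set" where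
  "Ggamma_plus P \<gamma> = {g \<in> Ggamma P \<gamma>. det (fst (snd (snd (snd (snd (snd (snd g))))))) > 0}"

definition Ggamma_minus :: "('x::finite,'w::finite,'u::finite,'y::finite,'z::finite) plant \<Rightarrow> real \<Rightarrow> ('x,'u,'y) lmivar set" where
  "Ggamma_minus P \<gamma> = {g \<in> Ggamma P \<gamma>. det (fst (snd (snd (snd (snd (snd (snd g))))))) < 0}"

definition Phi :: "('x::finite,'w::finite,'u::finite,'y::finite,'z::finite) plant \<Rightarrow> ('x,'u,'y) lmivar \<Rightarrow> ('x,'u,'y) ctrl" where
  "Phi P g = (case g of (X, Y, Ah, Bh, Ch, Dh, Pm, Xi) \<Rightarrow>
     matrix_inv (blockm (mat 1 :: real^'u^'u) (0 :: real^'x^'u) (Y ** pB2 P) Xi)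
     ** blockm Dh Ch Bh (Ah - Y ** pA P ** X)
     ** matrix_inv (blockm (mat 1 :: real^'y^'y) (pC2 P ** X) (0 :: real^'y^'x) Pm))"

fun higher_differentiable_on ::
  "'a::real_normed_vector set \<Rightarrow> ('a \<Rightarrow> 'b::real_normed_vector) \<Rightarrow> nat \<Rightarrow> bool" where
  "higher_differentiable_on S f 0 \<longleftrightarrow> continuous_on S f"
| "higher_differentiable_on S f (Suc n) \<longleftrightarrow>
     (\<forall>x\<in>S. f differentiable (at x)) \<and>
     (\<forall>v. higher_differentiable_on S (\<lambda>x. frechet_derivative f (at x) v) n)"

definition smooth_on :: "'a::real_normed_vector set \<Rightarrow> ('a \<Rightarrow> 'b::real_normed_vector) \<Rightarrow> bool" where
  "smooth_on S f \<longleftrightarrow> (\<forall>n. higher_differentiable_on S f n)"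

definition diffeomorphism ::
  "'a::real_normed_vector set \<Rightarrow> 'b::real_normed_vector set \<Rightarrow> ('a \<Rightarrow> 'b) \<Rightarrow> bool" where
  "diffeomorphism S T f \<longleftrightarrow>
     (\<exists>g. homeomorphism S T f g \<and> smooth_on S f \<and> smooth_on T g)"

end

theory Submission
  imports Defs
begin


lemma minv_props:
  fixes A :: "real^'n::finite^'n"
  assumes "invertible A"
  shows "A ** matrix_inv A = mat 1" "matrix_inv A ** A = mat 1"
  using someI_ex[OF assms[unfolded invertible_def]] unfolding matrix_inv_def by auto

lemma minv_unique:
  fixes A B :: "real^'n::finite^'n"
  assumes "A ** B = mat 1"
  shows "matrix_inv A = B"
proof -
  have BA: "B ** A = mat 1" using assms matrix_left_right_inverse by blast
  have inv: "invertible A" using assms BA invertible_def by blast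
  have "matrix_inv A = matrix_inv A ** (A ** B)" using assms by simp
  also have "\<dots> = (matrix_inv A ** A) ** B" by (simp add: matrix_mul_assoc)
  also have "\<dots> = B" using minv_props[OF inv] by simp
  finally show ?thesis .
qed

lemma blockm_mult:
  fixes A :: "real^'n1::finite^'m1::finite" and B :: "real^'n2::finite^'m1"
    and C :: "real^'n1^'m2::finite" and D :: "real^'n2^'m2"
    and E :: "real^'k1::finite^'n1" and F :: "real^'k2::finite^'n1"
    and G :: "real^'k1^'n2" and H :: "real^'k2^'n2"
  shows "blockm A B C D ** blockm E F G H =
     blockm (A**E + B**G) (A**F + B**H) (C**E + D**G) (C**F + D**H)"
  unfolding blockm_def matrix_matrix_mult_def
  by (auto simp: vec_eq_iff sum.Plus[where A=UNIV and B=UNIV, simplified] o_def sum.distrib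
      split: sum.split)

lemma blockm_eye: "blockm (mat 1 :: real^'a::finite^'a) 0 0 (mat 1 :: real^'b::finite^'b) = mat 1"
  unfolding blockm_def by (auto simp: vec_eq_iff mat_def split: sum.split)

lemma blockm_blk: "blockm (blk11 K) (blk12 K) (blk21 K) (blk22 K) = K"
  unfolding blockm_def blk11_def blk12_def blk21_def blk22_def
  by (auto simp: vec_eq_iff split: sum.split)

lemma blk_blockm: "blk11 (blockm A B C D) = A" "blk12 (blockm A B C D) = B"
   "blk21 (blockm A B C D) = C" "blk22 (blockm A B C D) = D"
  unfolding blockm_def blk11_def blk12_def blk21_def blk22_def
  by (auto simp: vec_eq_iff)



lemma hdo_const: "higher_differentiable_on S (\<lambda>x. c) n"
proof (induction n arbitrary: c)
  case 0 then show ?case by simp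
next
  case (Suc n)
  have "\<And>x. frechet_derivative (\<lambda>x. c) (at x) = (\<lambda>v. 0)"
    by (metis frechet_derivative_at has_derivative_const)
  then show ?case using Suc by simp
qed

lemma hdo_linear:
  assumes "bounded_linear f"
  shows "higher_differentiable_on S f n"
proof (cases n)
  case 0 then show ?thesis using assms by (simp add: linear_continuous_on)
next
  case (Suc m)
  have "\<And>x. frechet_derivative f (at x) = f"
    by (metis frechet_derivative_at assms bounded_linear_imp_has_derivative)
  moreover have "\<And>x. f differentiable (at x)"
    using assms bounded_linear_imp_differentiable by blast
  ultimately show ?thesis using Suc by (auto intro: hdo_const)
qed

lemma smooth_linear: "bounded_linear f \<Longrightarrow> smooth_on S f"
  unfolding smooth_on_def using hdo_linear by blast

lemma pd_det:
  fixes X Y :: "real^'x::finite^'x"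
  assumes "pos_def (blockm X (mat 1) (mat 1) Y)"
  shows "det (mat 1 - Y ** X) \<noteq> 0"
proof -
  have "\<forall>v. (mat 1 - Y ** X) *v v = 0 \<longrightarrow> v = 0"
  proof (intro allI impI)
    fix v :: "real^'x"
    assume h: "(mat 1 - Y ** X) *v v = 0"
    define w where "w = X *v v"
    have vY: "v = Y *v w" using h unfolding w_def
      by (simp add: matrix_vector_mult_diff_rdistrib matrix_vector_mul_assoc)
    define z :: "real^('x+'x)" where "z = (\<chi> i. case i of Inl a \<Rightarrow> v$a | Inr b \<Rightarrow> - (w$b))"
    have Mz: "blockm X (mat 1) (mat 1) Y *v z = 0"
    proof -
      have "(blockm X (mat 1) (mat 1) Y *v z) $ i = 0" for i
      proof (cases i)
        case (Inl a)
        have "(blockm X (mat 1) (mat 1) Y *v z) $ i = (X *v v)$a - w$a"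
          unfolding Inl blockm_def matrix_vector_mult_def z_def
          by (simp add: sum.Plus[where A=UNIV and B=UNIV, simplified] o_def mat_def
               sum_negf if_distrib[where f="\<lambda>c. c * _"] cong: if_cong)
        then show ?thesis by (simp add: w_def)
      next
        case (Inr b)
        have "(blockm X (mat 1) (mat 1) Y *v z) $ i = v$b - (Y *v w)$b"
          unfolding Inr blockm_def matrix_vector_mult_def z_def
          by (simp add: sum.Plus[where A=UNIV and B=UNIV, simplified] o_def mat_def
               sum_negf if_distrib[where f="\<lambda>c. c * _"] cong: if_cong)
        then show ?thesis using vY by simp
      qed
      then show ?thesis by (simp add: vec_eq_iff)
    qed
    show "v = 0"
    proof (rule ccontr)
      assume "v \<noteq> 0"
      then obtain a where "v$a \<noteq> 0" by (auto simp: vec_eq_iff)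
      then have "z \<noteq> 0" unfolding z_def by (auto simp: vec_eq_iff intro!: exI[of _ "Inl a"])
      then show False using assms Mz unfolding pos_def_def by fastforce
    qed
  qed
  then have "invertible (mat 1 - Y ** X)"
    using matrix_left_invertible_ker invertible_left_inverse by blast
  then show ?thesis using invertible_det_nz by blast
qed



lemma mm_zero: "(0::real^'n::finite^'m::finite) ** (A::real^'k::finite^'n) = 0"
   "(B::real^'n^'m) ** (0::real^'k^'n) = 0"
  by (auto simp: matrix_matrix_mult_def vec_eq_iff)

lemma mm_scaleR_l: "(c *\<^sub>R (A::real^'n::finite^'m::finite)) ** (B::real^'k::finite^'n) = c *\<^sub>R (A ** B)"
  by (auto simp: matrix_matrix_mult_def vec_eq_iff sum_distrib_left algebra_simps)
lemma mm_scaleR_r: "(A::real^'n::finite^'m::finite) ** (c *\<^sub>R (B::real^'k::finite^'n)) = c *\<^sub>R (A ** B)"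
  by (auto simp: matrix_matrix_mult_def vec_eq_iff sum_distrib_left algebra_simps)

lemma mm_radd: "((A::real^'n::finite^'m::finite) + B) ** (C::real^'k::finite^'n) = A ** C + B ** C"
  by (auto simp: matrix_matrix_mult_def vec_eq_iff sum.distrib algebra_simps)
lemma mm_uminus: "(A::real^'n::finite^'m::finite) ** (- (B::real^'k::finite^'n)) = - (A ** B)"
  by (auto simp: matrix_matrix_mult_def vec_eq_iff sum_negf)

lemma bl_sandwich:
  fixes A :: "real^'m::finite^'p::finite" and B :: "real^'q::finite^'n::finite"
  shows "bounded_linear (\<lambda>K::real^'n^'m. A ** K ** B)"
proof -
  have "linear (\<lambda>K::real^'n^'m. A ** K ** B)"
    by (rule linearI) (simp_all add: matrix_add_ldistrib mm_radd mm_scaleR_l mm_scaleR_r)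
  then show ?thesis using linear_conv_bounded_linear by blast
qed

lemma simtrans_eq:
  fixes K :: "('x::finite,'u::finite,'y::finite) ctrl"
  shows "simtrans T K = blockm (mat 1 :: real^'u^'u) 0 0 T ** K ** blockm (mat 1 :: real^'y^'y) 0 0 (matrix_inv T)"
proof -
  have "blockm (mat 1 :: real^'u^'u) 0 0 T ** K ** blockm (mat 1 :: real^'y^'y) 0 0 (matrix_inv T)
      = blockm (mat 1 :: real^'u^'u) 0 0 T ** blockm (blk11 K) (blk12 K) (blk21 K) (blk22 K)
         ** blockm (mat 1 :: real^'y^'y) 0 0 (matrix_inv T)"
    by (simp add: blockm_blk)
  also have "\<dots> = simtrans T K"
    unfolding simtrans_def by (simp add: blockm_mult mm_zero matrix_mul_assoc)
  finally show ?thesis by simp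
qed

lemma diag_inv:
  fixes T :: "real^'x::finite^'x"
  assumes "invertible T"
  shows "blockm (mat 1 :: real^'a::finite^'a) 0 0 T ** blockm (mat 1) 0 0 (matrix_inv T) = mat 1"
        "blockm (mat 1 :: real^'a::finite^'a) 0 0 (matrix_inv T) ** blockm (mat 1) 0 0 T = mat 1"
  using minv_props[OF assms] by (simp_all add: blockm_mult mm_zero blockm_eye)

lemma Phi_T:
  fixes P :: "('x::finite,'w::finite,'u::finite,'y::finite,'z::finite) plant"
  assumes T: "invertible T" and Xi: "invertible Xi" and Pm: "invertible Pm"
  shows "Phi P (X,Y,Ah,Bh,Ch,Dh, T**Pm, Xi ** matrix_inv T) = simtrans T (Phi P (X,Y,Ah,Bh,Ch,Dh,Pm,Xi))"
proof -
  define L where "L = blockm (mat 1 :: real^'u^'u) (0 :: real^'x^'u) (Y ** pB2 P) Xi"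
  define L' where "L' = blockm (mat 1 :: real^'u^'u) (0 :: real^'x^'u) (Y ** pB2 P) (Xi ** matrix_inv T)"
  define R where "R = blockm (mat 1 :: real^'y^'y) (pC2 P ** X) (0 :: real^'y^'x) Pm"
  define R' where "R' = blockm (mat 1 :: real^'y^'y) (pC2 P ** X) (0 :: real^'y^'x) (T ** Pm)"
  define N where "N = blockm Dh Ch Bh (Ah - Y ** pA P ** X)"
  define DT where "DT = blockm (mat 1 :: real^'u^'u) 0 0 T"
  define ET where "ET = blockm (mat 1 :: real^'y^'y) 0 0 (matrix_inv T)"
  have "L ** blockm (mat 1) 0 (- (matrix_inv Xi ** Y ** pB2 P)) (matrix_inv Xi) = mat 1"
  proof -
    have e: "Xi ** (matrix_inv Xi ** M) = M" for M :: "real^'u^'x"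
      by (simp only: matrix_mul_assoc minv_props(1)[OF Xi] matrix_mul_lid)
    show ?thesis unfolding L_def using minv_props[OF Xi]
      by (simp add: blockm_mult mm_zero blockm_eye mm_uminus e matrix_mul_assoc)
  qed
  then have Linv: "L ** matrix_inv L = mat 1" using minv_unique by metis
  have "R ** blockm (mat 1) (- (pC2 P ** X ** matrix_inv Pm)) 0 (matrix_inv Pm) = mat 1"
    unfolding R_def using minv_props[OF Pm]
    by (simp add: blockm_mult mm_zero blockm_eye mm_uminus matrix_mul_assoc)
  then have Rinv: "R ** matrix_inv R = mat 1" using minv_unique by metis
  have L'eq: "L' = L ** blockm (mat 1) 0 0 (matrix_inv T)"
    unfolding L'_def L_def by (simp add: blockm_mult mm_zero)
  have R'eq: "R' = blockm (mat 1) 0 0 T ** R"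
    unfolding R'_def R_def by (simp add: blockm_mult mm_zero)
  have "L' ** (DT ** matrix_inv L) = mat 1"
  proof -
    have "L' ** (DT ** matrix_inv L) = L ** ((blockm (mat 1) 0 0 (matrix_inv T) ** DT) ** matrix_inv L)"
      unfolding L'eq by (simp only: matrix_mul_assoc)
    then show ?thesis unfolding DT_def by (simp only: diag_inv(2)[OF T] Linv matrix_mul_lid)
  qed
  then have iL': "matrix_inv L' = DT ** matrix_inv L" by (rule minv_unique)
  have "R' ** (matrix_inv R ** ET) = mat 1"
  proof -
    have "R' ** (matrix_inv R ** ET) = blockm (mat 1) 0 0 T ** ((R ** matrix_inv R) ** ET)"
      unfolding R'eq by (simp only: matrix_mul_assoc)
    then show ?thesis unfolding ET_def by (simp only: diag_inv(1)[OF T] Rinv matrix_mul_lid matrix_mul_rid)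
  qed
  then have iR': "matrix_inv R' = matrix_inv R ** ET" by (rule minv_unique)
  have "Phi P (X,Y,Ah,Bh,Ch,Dh, T**Pm, Xi ** matrix_inv T) = matrix_inv L' ** N ** matrix_inv R'"
    unfolding Phi_def L'_def N_def R'_def by simp
  also have "\<dots> = DT ** (matrix_inv L ** N ** matrix_inv R) ** ET"
    unfolding iL' iR' by (simp add: matrix_mul_assoc)
  also have "\<dots> = simtrans T (Phi P (X,Y,Ah,Bh,Ch,Dh,Pm,Xi))"
    unfolding simtrans_eq DT_def ET_def Phi_def L_def N_def R_def by simp
  finally show ?thesis .
qed



lemma simtrans_inv:
  fixes S :: "real^'x::finite^'x" and K :: "('x,'u::finite,'y::finite) ctrl"
  assumes S: "invertible S"
  shows "simtrans (matrix_inv S) (simtrans S K) = K"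
proof -
  have mm: "matrix_inv (matrix_inv S) = S"
    by (rule minv_unique) (rule minv_props(2)[OF S])
  have "simtrans (matrix_inv S) (simtrans S K) =
     (blockm (mat 1 :: real^'u^'u) 0 0 (matrix_inv S) ** blockm (mat 1) 0 0 S) ** K **
     (blockm (mat 1 :: real^'y^'y) 0 0 (matrix_inv S) ** blockm (mat 1) 0 0 S)"
    unfolding simtrans_eq mm by (simp only: matrix_mul_assoc)
  also have "\<dots> = K" by (simp only: diag_inv(2)[OF S] matrix_mul_lid matrix_mul_rid)
  finally show ?thesis .
qed

lemma G_step:
  fixes P :: "('x::finite,'w::finite,'u::finite,'y::finite,'z::finite) plant"
  assumes S: "invertible S" and g: "(X,Y,Ah,Bh,Ch,Dh,Pm,Xi) \<in> Ggamma P \<gamma>"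
  shows "(X,Y,Ah,Bh,Ch,Dh,S**Pm,Xi ** matrix_inv S) \<in> Ggamma P \<gamma>"
    and "Phi P (X,Y,Ah,Bh,Ch,Dh,S**Pm,Xi ** matrix_inv S) = simtrans S (Phi P (X,Y,Ah,Bh,Ch,Dh,Pm,Xi))"
proof -
  have e: "Xi ** matrix_inv S ** (S ** Pm) = Xi ** Pm"
  proof -
    have "Xi ** matrix_inv S ** (S ** Pm) = Xi ** ((matrix_inv S ** S) ** Pm)"
      by (simp only: matrix_mul_assoc)
    then show ?thesis by (simp only: minv_props(2)[OF S] matrix_mul_lid)
  qed
  then show "(X,Y,Ah,Bh,Ch,Dh,S**Pm,Xi ** matrix_inv S) \<in> Ggamma P \<gamma>"
    using g unfolding Ggamma_def by simp
  have "det (Xi ** Pm) \<noteq> 0" using g pd_det unfolding Ggamma_def by auto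
  then have "det Xi \<noteq> 0" "det Pm \<noteq> 0" by (auto simp: det_mul)
  then show "Phi P (X,Y,Ah,Bh,Ch,Dh,S**Pm,Xi ** matrix_inv S) = simtrans S (Phi P (X,Y,Ah,Bh,Ch,Dh,Pm,Xi))"
    using Phi_T[OF S] invertible_det_nz by blast
qed

lemma img_sub:
  fixes P :: "('x::finite,'w::finite,'u::finite,'y::finite,'z::finite) plant"
  assumes S: "invertible S" and dS: "det S < 0"
  shows "simtrans S ` Phi P ` Ggamma_plus P \<gamma> \<subseteq> Phi P ` Ggamma_minus P \<gamma>"
    and "simtrans S ` Phi P ` Ggamma_minus P \<gamma> \<subseteq> Phi P ` Ggamma_plus P \<gamma>"
proof -
  show "simtrans S ` Phi P ` Ggamma_plus P \<gamma> \<subseteq> Phi P ` Ggamma_minus P \<gamma>"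
  proof
    fix K assume "K \<in> simtrans S ` Phi P ` Ggamma_plus P \<gamma>"
    then obtain X Y Ah Bh Ch Dh Pm Xi where g: "(X,Y,Ah,Bh,Ch,Dh,Pm,Xi) \<in> Ggamma_plus P \<gamma>"
      and K: "K = simtrans S (Phi P (X,Y,Ah,Bh,Ch,Dh,Pm,Xi))" by auto
    have g1: "(X,Y,Ah,Bh,Ch,Dh,Pm,Xi) \<in> Ggamma P \<gamma>" "det Pm > 0" using g unfolding Ggamma_plus_def by auto
    have "det (S ** Pm) < 0" using g1(2) dS by (simp add: det_mul mult_neg_pos)
    then have "(X,Y,Ah,Bh,Ch,Dh,S**Pm,Xi ** matrix_inv S) \<in> Ggamma_minus P \<gamma>"
      using G_step(1)[OF S g1(1)] unfolding Ggamma_minus_def by simp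
    moreover have "K = Phi P (X,Y,Ah,Bh,Ch,Dh,S**Pm,Xi ** matrix_inv S)"
      using G_step(2)[OF S g1(1)] K by simp
    ultimately show "K \<in> Phi P ` Ggamma_minus P \<gamma>" by blast
  qed
  show "simtrans S ` Phi P ` Ggamma_minus P \<gamma> \<subseteq> Phi P ` Ggamma_plus P \<gamma>"
  proof
    fix K assume "K \<in> simtrans S ` Phi P ` Ggamma_minus P \<gamma>"
    then obtain X Y Ah Bh Ch Dh Pm Xi where g: "(X,Y,Ah,Bh,Ch,Dh,Pm,Xi) \<in> Ggamma_minus P \<gamma>"
      and K: "K = simtrans S (Phi P (X,Y,Ah,Bh,Ch,Dh,Pm,Xi))" by auto
    have g1: "(X,Y,Ah,Bh,Ch,Dh,Pm,Xi) \<in> Ggamma P \<gamma>" "det Pm < 0" using g unfolding Ggamma_minus_def by auto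
    have "det (S ** Pm) > 0" using g1(2) dS by (simp add: det_mul mult_neg_neg)
    then have "(X,Y,Ah,Bh,Ch,Dh,S**Pm,Xi ** matrix_inv S) \<in> Ggamma_plus P \<gamma>"
      using G_step(1)[OF S g1(1)] unfolding Ggamma_plus_def by simp
    moreover have "K = Phi P (X,Y,Ah,Bh,Ch,Dh,S**Pm,Xi ** matrix_inv S)"
      using G_step(2)[OF S g1(1)] K by simp
    ultimately show "K \<in> Phi P ` Ggamma_plus P \<gamma>" by blast
  qed
qed

theorem theorem2:
  fixes P :: "('x::finite,'w::finite,'u::finite,'y::finite,'z::finite) plant"
    and \<gamma> :: real
  assumes "stabilizable (pA P) (pB2 P)"
    and "detectable (pC2 P) (pA P)"
    and "\<gamma> > gamma_opt P"
    and "{path_component_set (Kgamma P \<gamma>) K | K. K \<in> Kgamma P \<gamma>}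
           = {Phi P ` Ggamma_plus P \<gamma>, Phi P ` Ggamma_minus P \<gamma>}"
    and "Phi P ` Ggamma_plus P \<gamma> \<noteq> Phi P ` Ggamma_minus P \<gamma>"
  shows "\<forall>T :: real^'x^'x. invertible T \<and> det T < 0 \<longrightarrow>
           diffeomorphism (Phi P ` Ggamma_plus P \<gamma>) (Phi P ` Ggamma_minus P \<gamma>) (simtrans T)"
proof (intro allI impI, elim conjE)
  fix T :: "real^'x^'x"
  assume T: "invertible T" and dT: "det T < 0"
  define Ti where "Ti = matrix_inv T"
  have TTi: "T ** Ti = mat 1" "Ti ** T = mat 1" using minv_props[OF T] unfolding Ti_def by auto
  have Ti: "invertible Ti" using TTi invertible_def by blast
  have mTi: "matrix_inv Ti = T" by (rule minv_unique) (rule TTi(2))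
  have "det T * det Ti = 1" using TTi(1) by (metis det_I det_mul)
  then have dTi: "det Ti < 0" using dT
    by (smt (verit) mult_nonpos_nonneg)
  define Kp where "Kp = Phi P ` Ggamma_plus P \<gamma>"
  define Km where "Km = Phi P ` Ggamma_minus P \<gamma>"
  have inv1: "\<And>K. simtrans Ti (simtrans T K) = K" unfolding Ti_def using simtrans_inv[OF T] by blast
  have inv2: "\<And>K. simtrans T (simtrans Ti K) = K" using simtrans_inv[OF Ti] mTi by metis
  have s1: "simtrans T ` Kp \<subseteq> Km" "simtrans Ti ` Km \<subseteq> Kp"
    unfolding Kp_def Km_def
    by (rule img_sub(1)[OF T dT, of P \<gamma>], rule img_sub(2)[OF Ti dTi, of P \<gamma>])
  have im1: "simtrans T ` Kp = Km"
  proof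
    show "Km \<subseteq> simtrans T ` Kp"
    proof
      fix K assume "K \<in> Km"
      then have "simtrans Ti K \<in> Kp" using s1 by blast
      then show "K \<in> simtrans T ` Kp" using inv2[of K] by (metis image_eqI)
    qed
  qed (rule s1(1))
  have im2: "simtrans Ti ` Km = Kp"
  proof
    show "Kp \<subseteq> simtrans Ti ` Km"
    proof
      fix K assume "K \<in> Kp"
      then have "simtrans T K \<in> Km" using s1 by blast
      then show "K \<in> simtrans Ti ` Km" using inv1[of K] by (metis image_eqI)
    qed
  qed (rule s1(2))
  have bl: "bounded_linear (simtrans S :: ('x,'u,'y) ctrl \<Rightarrow> _)" for S :: "real^'x^'x"
    unfolding simtrans_eq[abs_def] by (rule bl_sandwich)
  have "homeomorphism Kp Km (simtrans T) (simtrans Ti)"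
    unfolding homeomorphism_def using inv1 inv2 im1 im2 bl
    by (auto intro: linear_continuous_on)
  moreover have "smooth_on Kp (simtrans T)" "smooth_on Km (simtrans Ti)"
    using bl smooth_linear by blast+
  ultimately show "diffeomorphism Kp Km (simtrans T)" unfolding Kp_def Km_def diffeomorphism_def
    by blast
qed


end
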